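(* Let $\mu$ be a probability measure on $\mathbb{C}$ with compact support, and let $X_1, X_2, \ldots$ be iid random variables with distribution $\mu$. Fix $\varepsilon > 0$. Then, almost surely, for all sufficiently large $n$, the polynomial $p_n(z) := \prod_{j=1}^n (z - X_j)$ has no critical points outside $N_\mu(\varepsilon)$.
   Context: For a probability measure $\mu$ on $\mathbb{C}$, $m_\mu(z) := \int_{\mathbb{C}} \frac{d\mu(x)}{z-x}$ for $z \notin \operatorname{supp}(\mu)$; $M_\mu := \{ z \in \mathbb{C}\setminus \operatorname{supp}(\mu) : m_\mu(z) = 0\}$; and $N_\mu(\varepsilon) := \{ z \in \mathbb{C} : \operatorname{dist}(z, \operatorname{supp}(\mu) \cup M_\mu) < \varepsilon\}$. A critical point of a polynomial is a zero of its derivative. *)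

theory Defs
  imports "HOL-Probability.Probability" "HOL-Computational_Algebra.Polynomial"
begin

definition msupp :: "complex measure \<Rightarrow> complex set" where
  "msupp \<mu> = {x. \<forall>e>0. emeasure \<mu> (ball x e) > 0}"

definition cauchy_transform :: "complex measure \<Rightarrow> complex \<Rightarrow> complex" where
  "cauchy_transform \<mu> z = (LINT x|\<mu>. 1 / (z - x))"

definition cauchy_zeros :: "complex measure \<Rightarrow> complex set" where
  "cauchy_zeros \<mu> = {z. z \<notin> msupp \<mu> \<and> cauchy_transform \<mu> z = 0}"

definition nbhd_N :: "complex measure \<Rightarrow> real \<Rightarrow> complex set" where
  "nbhd_N \<mu> \<epsilon> = {z. infdist z (msupp \<mu> \<union> cauchy_zeros \<mu>) < \<epsilon>}"

definition emp_poly :: "(nat \<Rightarrow> complex) \<Rightarrow> nat \<Rightarrow> complex poly" where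
  "emp_poly x n = (\<Prod>j\<in>{1..n}. [:- x j, 1:])"

definition critical_points :: "complex poly \<Rightarrow> complex set" where
  "critical_points p = {z. poly (pderiv p) z = 0}"

end

theory Submission
  imports Defs
begin

lemma slln_real:
  fixes M :: "'a measure" and Y :: "nat \<Rightarrow> 'a \<Rightarrow> real"
  assumes P: "prob_space M"
  and ind: "prob_space.indep_vars M (\<lambda>_. borel) Y UNIV"
  and bnd: "\<And>i. AE x in M. Y i x \<in> {a..b}"
  and ab: "a < b"
  and ex: "\<And>i. integral\<^sup>L M (Y i) = c"
  and t: "t > 0"
  shows "AE x in M. eventually (\<lambda>n. \<bar>(\<Sum>i\<in>{1..n}. Y i x) - real n * c\<bar> < real n * t) sequentially"
proof -
  interpret prob_space M by (rule P)
  have rv[measurable]: "Y i \<in> borel_measurable M" for i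
    using ind unfolding indep_vars_def by blast
  define q where "q = exp (-2 * t\<^sup>2 / (b - a)\<^sup>2)"
  have q0: "0 \<le> q" and q1: "q < 1" using t ab by (auto simp: q_def)
  define A where "A n = {x\<in>space M. \<bar>(\<Sum>i\<in>{1..n}. Y i x) - real n * c\<bar> \<ge> real n * t}" for n
  have Ameas[measurable]: "A n \<in> sets M" for n unfolding A_def by measurable
  have Abnd: "measure M (A n) \<le> 2 * q ^ n" for n
  proof (cases "n = 0")
    case True
    have "measure M (A n) \<le> 1" by (rule prob_le_1)
    moreover have "2 * q ^ n = 2" using True by simp
    ultimately show ?thesis by linarith
  next
    case False
    interpret H: Hoeffding_ineq M "{1..n}" Y "\<lambda>_. a" "\<lambda>_. b" "real n * c"
    proof unfold_locales
      show "prob_space.indep_vars M (\<lambda>_. borel) Y {1..n}"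
        by (rule indep_vars_subset[OF ind]) auto
    qed (use bnd ex in auto)
    have pos: "(\<Sum>i\<in>{1..n}. (b - a)\<^sup>2) > 0" using False ab by simp
    have "measure M (A n) \<le> 2 * exp (-2 * (real n * t)\<^sup>2 / (\<Sum>i\<in>{1..n}. (b - a)\<^sup>2))"
      using H.Hoeffding_ineq_abs_ge[of "real n * t", OF _ pos] t unfolding A_def by simp
    also have "-2 * (real n * t)\<^sup>2 / (\<Sum>i\<in>{1..n}. (b - a)\<^sup>2) = real n * (-2 * t\<^sup>2 / (b - a)\<^sup>2)"
    proof -
      have d: "(b - a)\<^sup>2 \<noteq> 0" using ab by simp
      have "(\<Sum>i\<in>{1..n}. (b - a)\<^sup>2) = real n * (b - a)\<^sup>2" by simp
      moreover have "-2 * (N * T)\<^sup>2 / (N * D) = N * (-2 * T\<^sup>2 / D)" if "N \<noteq> 0" "D \<noteq> 0" for N T D :: real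
        using that by (simp add: field_simps power2_eq_square)
      ultimately show ?thesis using False d by simp
    qed
    also have "exp \<dots> = q ^ n" unfolding q_def by (rule exp_of_nat_mult)
    finally show ?thesis .
  qed
  have "summable (\<lambda>n. 2 * q ^ n)"
    using q0 q1 by (intro summable_mult summable_geometric) simp
  then have "summable (\<lambda>n. measure M (A n))"
    by (rule summable_comparison_test'[where N=0]) (use Abnd in simp)
  then have "AE x in M. eventually (\<lambda>n. x \<in> space M - A n) sequentially"
    by (intro borel_cantelli_AE1) (auto simp: emeasure_eq_measure)
  then show ?thesis
    by (rule AE_mp) (auto intro!: AE_I2 elim!: eventually_mono simp: A_def)
qed
lemma slln_complex:
  fixes M :: "'a measure" and Y :: "nat \<Rightarrow> 'a \<Rightarrow> complex"
  assumes P: "prob_space M"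
  and ind: "prob_space.indep_vars M (\<lambda>_. borel) Y UNIV"
  and bnd: "\<And>i. AE x in M. cmod (Y i x) \<le> B"
  and int: "\<And>i. integrable M (Y i)"
  and ex: "\<And>i. integral\<^sup>L M (Y i) = c"
  and t: "t > 0"
  shows "AE x in M. eventually (\<lambda>n. cmod ((\<Sum>i\<in>{1..n}. Y i x) - of_nat n * c) < real n * t) sequentially"
proof -
  interpret prob_space M by (rule P)
  have bnd': "AE x in M. g (Y i x) \<in> {-\<bar>B\<bar>-1..\<bar>B\<bar>+1}" if "\<And>z. \<bar>g z\<bar> \<le> cmod z" for g i
    using bnd[of i]
  proof eventually_elim
    case (elim x)
    have "\<bar>g (Y i x)\<bar> \<le> cmod (Y i x)" by (rule that)
    with elim show ?case by auto
  qed
  have "AE x in M. eventually (\<lambda>n. \<bar>(\<Sum>i\<in>{1..n}. Re (Y i x)) - real n * Re c\<bar> < real n * (t/2)) sequentially"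
  proof (rule slln_real[OF P])
    show "prob_space.indep_vars M (\<lambda>_. borel) (\<lambda>i x. Re (Y i x)) UNIV"
      by (rule indep_vars_compose2[OF ind]) auto
    show "AE x in M. Re (Y i x) \<in> {-\<bar>B\<bar>-1..\<bar>B\<bar>+1}" for i
      by (rule bnd') (rule abs_Re_le_cmod)
    show "(LINT x|M. Re (Y i x)) = Re c" for i using integral_Re[OF int[of i]] ex[of i] by simp
  qed (use t in auto)
  moreover have "AE x in M. eventually (\<lambda>n. \<bar>(\<Sum>i\<in>{1..n}. Im (Y i x)) - real n * Im c\<bar> < real n * (t/2)) sequentially"
  proof (rule slln_real[OF P])
    show "prob_space.indep_vars M (\<lambda>_. borel) (\<lambda>i x. Im (Y i x)) UNIV"
      by (rule indep_vars_compose2[OF ind]) auto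
    show "AE x in M. Im (Y i x) \<in> {-\<bar>B\<bar>-1..\<bar>B\<bar>+1}" for i
      by (rule bnd') (rule abs_Im_le_cmod)
    show "(LINT x|M. Im (Y i x)) = Im c" for i using integral_Im[OF int[of i]] ex[of i] by simp
  qed (use t in auto)
  ultimately show ?thesis
  proof eventually_elim
    case (elim x)
    then show ?case
    proof (eventually_elim)
      case (elim n)
      have "cmod ((\<Sum>i\<in>{1..n}. Y i x) - of_nat n * c) \<le> \<bar>Re ((\<Sum>i\<in>{1..n}. Y i x) - of_nat n * c)\<bar> + \<bar>Im ((\<Sum>i\<in>{1..n}. Y i x) - of_nat n * c)\<bar>"
        by (rule cmod_le)
      also have "\<dots> = \<bar>(\<Sum>i\<in>{1..n}. Re (Y i x)) - real n * Re c\<bar> + \<bar>(\<Sum>i\<in>{1..n}. Im (Y i x)) - real n * Im c\<bar>"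
        by (simp add: Re_sum Im_sum)
      also have "\<dots> < real n * t" using elim by linarith
      finally show ?case .
    qed
  qed
qed
lemma emp_poly_deriv:
  assumes "\<forall>j\<in>{1..n}. z \<noteq> x j"
  shows "poly (emp_poly x n) z \<noteq> 0 \<and>
    poly (pderiv (emp_poly x n)) z = poly (emp_poly x n) z * (\<Sum>j\<in>{1..n}. 1 / (z - x j))"
  using assms
proof (induction n)
  case 0
  then show ?case by (simp add: emp_poly_def)
next
  case (Suc n)
  have e: "emp_poly x (Suc n) = emp_poly x n * [:- x (Suc n), 1:]"
    unfolding emp_poly_def by (simp add: prod.cl_ivl_Suc mult.commute)
  have IH: "poly (emp_poly x n) z \<noteq> 0 \<and>
    poly (pderiv (emp_poly x n)) z = poly (emp_poly x n) z * (\<Sum>j\<in>{1..n}. 1 / (z - x j))"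
    using Suc by auto
  have ne: "z - x (Suc n) \<noteq> 0" using Suc.prems by auto
  define P where "P = emp_poly x n"
  define a where "a = x (Suc n)"
  define S where "S = (\<Sum>j\<in>{1..n}. 1 / (z - x j))"
  have d1: "pderiv [:-a,1:] = 1" by (simp add: pderiv_pCons)
  have d: "pderiv (P * [:-a,1:]) = P + [:-a,1:] * pderiv P"
    unfolding pderiv_mult d1 by simp
  have "poly (pderiv (P * [:-a,1:])) z = poly P z + (z - a) * poly (pderiv P) z"
    unfolding d by (simp add: algebra_simps)
  also have "\<dots> = poly P z * (z - a) * (S + 1 / (z - a))"
    using IH ne unfolding P_def S_def a_def by (simp add: field_simps)
  also have "poly P z * (z - a) = poly (P * [:-a,1:]) z" by (simp add: algebra_simps)
  finally have "poly (pderiv (P * [:-a,1:])) z = poly (P * [:-a,1:]) z * (S + 1 / (z - a))" .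
  moreover have "(\<Sum>j\<in>{1..Suc n}. 1 / (z - x j)) = S + 1 / (z - a)"
    unfolding S_def a_def by (simp add: sum.cl_ivl_Suc)
  moreover have "poly (P * [:-a,1:]) z \<noteq> 0" using IH ne unfolding P_def a_def by simp
  ultimately show ?case unfolding e P_def a_def by simp
qed

lemma supp_full:
  fixes \<mu> :: "complex measure"
  assumes "sets \<mu> = sets borel"
  shows "- msupp \<mu> \<in> null_sets \<mu>"
proof -
  define F where "F = {ball x e | x e. e > 0 \<and> emeasure \<mu> (ball x e) = 0}"
  have sb: "ball x e \<in> sets \<mu>" for x e using assms by simp
  have UF: "\<Union>F = - msupp \<mu>"
  proof
    show "\<Union>F \<subseteq> - msupp \<mu>"
    proof
      fix y assume "y \<in> \<Union>F"
      then obtain x e where xe: "e > 0" "emeasure \<mu> (ball x e) = 0" "y \<in> ball x e"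
        unfolding F_def by auto
      define d where "d = e - dist x y"
      have d: "d > 0" using xe by (simp add: d_def dist_commute)
      have "ball y d \<subseteq> ball x e" unfolding d_def
        by (auto simp: ball_def) (metis dist_triangle add.commute less_diff_eq order.strict_trans1)
      then have "emeasure \<mu> (ball y d) \<le> emeasure \<mu> (ball x e)"
        by (intro emeasure_mono) (use sb in auto)
      then have "emeasure \<mu> (ball y d) = 0" using xe by simp
      then show "y \<in> - msupp \<mu>" using d unfolding msupp_def by auto
    qed
  next
    show "- msupp \<mu> \<subseteq> \<Union>F"
    proof
      fix y assume "y \<in> - msupp \<mu>"
      then obtain e where "e > 0" "\<not> emeasure \<mu> (ball y e) > 0" unfolding msupp_def by auto
      then have "ball y e \<in> F" unfolding F_def by (auto simp: not_gr_zero)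
      then show "y \<in> \<Union>F" using \<open>e > 0\<close> by (meson UnionI centre_in_ball)
    qed
  qed
  obtain F' where F': "F' \<subseteq> F" "countable F'" "\<Union>F' = \<Union>F"
    by (rule Lindelof[of F]) (auto simp: F_def)
  have "\<Union>(id ` F') \<in> null_sets \<mu>"
  proof (rule null_sets_UN'[OF F'(2)])
    fix B assume "B \<in> F'"
    then have "B \<in> F" using F' by auto
    then show "id B \<in> null_sets \<mu>" unfolding F_def using sb by auto
  qed
  then show ?thesis using F' UF by simp
qed
lemma inv_diff_bound:
  fixes a b :: complex
  assumes "cmod a \<ge> e" "cmod b \<ge> e" "e > 0"
  shows "cmod (1/a - 1/b) \<le> cmod (b - a) / e\<^sup>2"
proof -
  have a: "a \<noteq> 0" and b: "b \<noteq> 0" using assms by auto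
  have "1/a - 1/b = (b - a) / (a * b)" using a b by (simp add: field_simps)
  then have "cmod (1/a - 1/b) = cmod (b - a) / (cmod a * cmod b)" by (simp add: norm_mult norm_divide)
  also have "\<dots> \<le> cmod (b - a) / e\<^sup>2"
  proof (rule frac_le)
    show "e\<^sup>2 \<le> cmod a * cmod b" unfolding power2_eq_square
      using assms by (intro mult_mono) auto
  qed (use assms in auto)
  finally show ?thesis .
qed

lemma re_pos:
  fixes x z :: complex
  assumes "cmod x \<le> R" "cmod z > 2 * R" "R > 0"
  shows "Re (z / (z - x)) > 0"
proof -
  have ne: "z - x \<noteq> 0" using assms by auto
  have a: "Re (z * cnj x) = Re z * Re x + Im z * Im x" by simp
  have b: "Re (z * cnj x) \<le> cmod (z * cnj x)" by (rule complex_Re_le_cmod)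
  have c: "cmod (z * cnj x) = cmod z * cmod x" by (simp only: norm_mult complex_mod_cnj)
  have d: "cmod z * cmod x < cmod z * cmod z"
    using assms by (intro mult_strict_left_mono) auto
  have e: "Re z * Re z + Im z * Im z = cmod z * cmod z"
    using cmod_power2[of z] by (simp only: power2_eq_square)
  have f: "Re z * Re (z - x) + Im z * Im (z - x) = (Re z * Re z + Im z * Im z) - (Re z * Re x + Im z * Im x)"
    by (simp add: algebra_simps)
  have num: "Re z * Re (z - x) + Im z * Im (z - x) > 0"
    using a b c d e f by linarith
  have "Re (z / (z - x)) = (Re z * Re (z - x) + Im z * Im (z - x)) / (cmod (z - x))\<^sup>2"
    by (rule Re_divide')
  then show ?thesis using num ne by simp
qed

theorem mainTheorem3:
  fixes \<mu> :: "complex measure" and M :: "'a measure"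
    and X :: "nat \<Rightarrow> 'a \<Rightarrow> complex" and \<epsilon> :: real
  assumes "prob_space \<mu>" and "sets \<mu> = sets borel"
    and "compact (msupp \<mu>)"
    and "prob_space M"
    and "\<And>i. X i \<in> borel_measurable M"
    and "prob_space.indep_vars M (\<lambda>_. borel) X UNIV"
    and "\<And>i. distr M borel (X i) = \<mu>"
    and "\<epsilon> > 0"
  shows "AE \<omega> in M. eventually
           (\<lambda>n. critical_points (emp_poly (\<lambda>j. X j \<omega>) n) \<subseteq> nbhd_N \<mu> \<epsilon>) sequentially"
proof -
  note Pmu = assms(1) and setsmu = assms(2) and cpt = assms(3) and PM = assms(4)
    and Xm = assms(5) and ind = assms(6) and dX = assms(7) and eps = assms(8)
  interpret M: prob_space M by (rule PM)
  interpret mu: prob_space \<mu> by (rule Pmu)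
  note [measurable_cong] = setsmu
  have spmu: "space \<mu> = UNIV" using sets_eq_imp_space_eq[OF setsmu] by simp
  define S where "S = msupp \<mu>"
  define T where "T = msupp \<mu> \<union> cauchy_zeros \<mu>"
  define m where "m = cauchy_transform \<mu>"
  define f where "f = (\<lambda>z x. 1 / (z - x :: complex))"
  have Scl: "closed S" using cpt compact_imp_closed unfolding S_def by blast
  have nullS: "- S \<in> null_sets \<mu>" unfolding S_def by (rule supp_full[OF setsmu])
  have AEmu: "AE x in \<mu>. x \<in> S"
    by (rule AE_I'[OF nullS]) auto
  have AEX: "AE \<omega> in M. \<forall>j. X j \<omega> \<in> S"
  proof (subst AE_all_countable, intro allI)
    fix j
    have "AE x in distr M borel (X j). x \<in> S" unfolding dX[of j] by (rule AEmu)
    then show "AE \<omega> in M. X j \<omega> \<in> S"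
      by (subst (asm) AE_distr_iff) (use Xm Scl in auto)
  qed
  obtain R where R: "R > 0" "\<And>x. x \<in> S \<Longrightarrow> cmod x \<le> R"
    using cpt unfolding S_def by (metis compact_imp_bounded bounded_pos)
  have K1: "cmod (z - x) \<ge> \<epsilon>" if "\<epsilon> \<le> infdist z T" "x \<in> S" for z x
  proof -
    have "infdist z T \<le> dist z x" using that by (intro infdist_le) (auto simp: T_def S_def)
    then show ?thesis using that by (simp add: dist_norm)
  qed
  have K1': "cmod (f z x) \<le> 1 / \<epsilon>" if "\<epsilon> \<le> infdist z T" "x \<in> S" for z x
  proof -
    have "cmod (z - x) \<ge> \<epsilon>" by (rule K1[OF that])
    then show ?thesis unfolding f_def using eps by (simp add: norm_divide frac_le)
  qed
  have K2: "cmod (f z x - f w x) \<le> cmod (z - w) / \<epsilon>\<^sup>2"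
    if "\<epsilon> \<le> infdist z T" "\<epsilon> \<le> infdist w T" "x \<in> S" for z w x
  proof -
    have "cmod (f z x - f w x) \<le> cmod ((w - x) - (z - x)) / \<epsilon>\<^sup>2"
      unfolding f_def by (rule inv_diff_bound) (use K1 that eps in auto)
    also have "(w - x) - (z - x) = -(z - w)" by simp
    finally show ?thesis by (simp only: norm_minus_cancel)
  qed
  have fm[measurable]: "f z \<in> borel_measurable borel" for z unfolding f_def by measurable
  have fmu[measurable]: "f z \<in> borel_measurable \<mu>" for z
    using fm[of z] measurable_cong_sets[OF setsmu refl] by simp
  have K3: "integrable \<mu> (f z)" if "\<epsilon> \<le> infdist z T" for z
  proof (rule mu.integrable_const_bound)
    show "AE x in \<mu>. norm (f z x) \<le> 1 / \<epsilon>" using AEmu by eventually_elim (use K1' that in auto)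
  qed (rule fmu)
  have mdef: "m z = integral\<^sup>L \<mu> (f z)" for z unfolding m_def cauchy_transform_def f_def by simp
  have K4: "cmod (m z - m w) \<le> cmod (z - w) / \<epsilon>\<^sup>2"
    if "\<epsilon> \<le> infdist z T" "\<epsilon> \<le> infdist w T" for z w
  proof -
    have "m z - m w = integral\<^sup>L \<mu> (\<lambda>x. f z x - f w x)"
      unfolding mdef using Bochner_Integration.integral_diff[OF K3[OF that(1)] K3[OF that(2)]] by simp
    then have "cmod (m z - m w) \<le> (\<integral>x. cmod (f z x - f w x) \<partial>\<mu>)"
      by (simp only: integral_norm_bound)
    also have "\<dots> \<le> cmod (z - w) / \<epsilon>\<^sup>2"
    proof (rule mu.integral_le_const)
      show "integrable \<mu> (\<lambda>x. cmod (f z x - f w x))"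
        using Bochner_Integration.integrable_diff[OF K3[OF that(1)] K3[OF that(2)]] by (rule integrable_norm)
      show "AE x in \<mu>. cmod (f z x - f w x) \<le> cmod (z - w) / \<epsilon>\<^sup>2"
        using AEmu by eventually_elim (use K2 that in auto)
    qed
    finally show ?thesis .
  qed
  define K where "K = {z. \<epsilon> \<le> infdist z T} \<inter> cball 0 (2 * R)"
  have Kc: "compact K" unfolding K_def
    by (intro closed_Int_compact compact_cball closed_Collect_le continuous_on_const
        continuous_on_infdist continuous_on_id)
  have Knz: "m z \<noteq> 0" if "z \<in> K" for z
  proof
    assume m0: "m z = 0"
    have zT: "\<epsilon> \<le> infdist z T" using that by (auto simp: K_def)
    have "z \<notin> T"
    proof
      assume "z \<in> T"
      then have "infdist z T \<le> dist z z" by (rule infdist_le)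
      then show False using zT eps by simp
    qed
    then show False using m0 unfolding T_def cauchy_zeros_def m_def by auto
  qed
  have prob: "AE \<omega> in M. eventually (\<lambda>n. \<forall>z\<in>K. (\<Sum>j\<in>{1..n}. f z (X j \<omega>)) \<noteq> 0) sequentially"
  proof (cases "K = {}")
    case True
    then show ?thesis by simp
  next
    case False
    have contm: "continuous_on K (\<lambda>z. cmod (m z))"
    proof (rule continuous_on_norm, rule lipschitz_on_continuous_on)
      show "(1 / \<epsilon>\<^sup>2)-lipschitz_on K m"
      proof (rule lipschitz_onI)
        fix z w assume "z \<in> K" "w \<in> K"
        then have "cmod (m z - m w) \<le> cmod (z - w) / \<epsilon>\<^sup>2" by (intro K4) (auto simp: K_def)
        then show "dist (m z) (m w) \<le> 1 / \<epsilon>\<^sup>2 * dist z w" by (simp add: dist_norm)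
      qed simp
    qed
    obtain z0 where z0: "z0 \<in> K" "\<And>z. z \<in> K \<Longrightarrow> cmod (m z0) \<le> cmod (m z)"
      using continuous_attains_inf[OF Kc False contm] by blast
    define \<delta> where "\<delta> = cmod (m z0)"
    have \<delta>: "\<delta> > 0" using Knz[OF z0(1)] by (simp add: \<delta>_def)
    define r where "r = \<delta> * \<epsilon>\<^sup>2 / 4"
    have r: "r > 0" using \<delta> eps by (simp add: r_def)
    obtain F where F: "F \<subseteq> K" "finite F" "K \<subseteq> (\<Union>w\<in>F. ball w r)"
      by (rule compactE_image[OF Kc, of K "\<lambda>w. ball w r"]) (use r in auto)
    have slln: "AE \<omega> in M. eventually (\<lambda>n. cmod ((\<Sum>j\<in>{1..n}. f w (X j \<omega>)) - of_nat n * m w) < real n * (\<delta>/4)) sequentially"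
      if w: "w \<in> K" for w
    proof (rule slln_complex[OF PM])
      have wT: "\<epsilon> \<le> infdist w T" using w by (auto simp: K_def)
      show "prob_space.indep_vars M (\<lambda>_. borel) (\<lambda>j \<omega>. f w (X j \<omega>)) UNIV"
        by (rule M.indep_vars_compose2[OF ind]) auto
      show "AE \<omega> in M. cmod (f w (X j \<omega>)) \<le> 1 / \<epsilon>" for j
        using AEX by eventually_elim (use K1' wT in auto)
      show "integrable M (\<lambda>\<omega>. f w (X j \<omega>))" for j
        using K3[OF wT] integrable_distr_eq[OF Xm[of j] fm[of w]] dX[of j] by simp
      show "integral\<^sup>L M (\<lambda>\<omega>. f w (X j \<omega>)) = m w" for j
        using integral_distr[OF Xm[of j] fm[of w]] dX[of j] mdef[of w] by simp
    qed (use \<delta> in simp)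
    have "AE \<omega> in M. \<forall>w\<in>F. eventually (\<lambda>n. cmod ((\<Sum>j\<in>{1..n}. f w (X j \<omega>)) - of_nat n * m w) < real n * (\<delta>/4)) sequentially"
      using F slln by (subst AE_finite_all) auto
    with AEX show ?thesis
    proof eventually_elim
      case (elim \<omega>)
      have ev: "eventually (\<lambda>n. \<forall>w\<in>F. cmod ((\<Sum>j\<in>{1..n}. f w (X j \<omega>)) - of_nat n * m w) < real n * (\<delta>/4)) sequentially"
        using elim F(2) by (intro eventually_ball_finite) auto
      show ?case
        using ev eventually_ge_at_top[of "1::nat"]
      proof eventually_elim
        case (elim n)
        note Xs = \<open>\<forall>j. X j \<omega> \<in> S\<close>
        show ?case
        proof (intro ballI notI)
          fix z assume zK: "z \<in> K" and A0: "(\<Sum>j\<in>{1..n}. f z (X j \<omega>)) = 0"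
          obtain w where wF: "w \<in> F" and zw: "z \<in> ball w r" using F zK by auto
          have wK: "w \<in> K" using wF F by auto
          have zT: "\<epsilon> \<le> infdist z T" and wT: "\<epsilon> \<le> infdist w T" using zK wK by (auto simp: K_def)
          have dzw: "cmod (z - w) < r" using zw by (simp add: dist_norm norm_minus_commute)
          have e1: "cmod ((\<Sum>j\<in>{1..n}. f z (X j \<omega>)) - (\<Sum>j\<in>{1..n}. f w (X j \<omega>))) \<le> real n * (\<delta>/4)"
          proof -
            have "cmod ((\<Sum>j\<in>{1..n}. f z (X j \<omega>)) - (\<Sum>j\<in>{1..n}. f w (X j \<omega>)))
                = cmod (\<Sum>j\<in>{1..n}. f z (X j \<omega>) - f w (X j \<omega>))" by (simp add: sum_subtractf)
            also have "\<dots> \<le> (\<Sum>j\<in>{1..n}. cmod (f z (X j \<omega>) - f w (X j \<omega>)))" by (rule norm_sum)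
            also have "\<dots> \<le> (\<Sum>j\<in>{1..n}. cmod (z - w) / \<epsilon>\<^sup>2)"
              by (intro sum_mono K2 zT wT) (use Xs in auto)
            also have "\<dots> = real n * (cmod (z - w) / \<epsilon>\<^sup>2)" by simp
            also have "\<dots> \<le> real n * (\<delta>/4)"
            proof (rule mult_left_mono)
              have "cmod (z - w) / \<epsilon>\<^sup>2 \<le> r / \<epsilon>\<^sup>2" using dzw eps by (simp add: divide_right_mono)
              also have "r / \<epsilon>\<^sup>2 = \<delta> / 4" using eps by (simp add: r_def)
              finally show "cmod (z - w) / \<epsilon>\<^sup>2 \<le> \<delta> / 4" .
            qed simp
            finally show ?thesis .
          qed
          have e2: "cmod ((\<Sum>j\<in>{1..n}. f w (X j \<omega>)) - of_nat n * m w) < real n * (\<delta>/4)"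
            using elim(1) wF by blast
          have e3: "cmod (of_nat n * m w - of_nat n * m z) \<le> real n * (\<delta>/4)"
          proof -
            have "cmod (of_nat n * m w - of_nat n * m z) = real n * cmod (m w - m z)"
              by (simp add: right_diff_distrib[symmetric] norm_mult)
            also have "\<dots> \<le> real n * (\<delta>/4)"
            proof (rule mult_left_mono)
              have "cmod (m w - m z) \<le> cmod (w - z) / \<epsilon>\<^sup>2" by (rule K4[OF wT zT])
              also have "\<dots> \<le> r / \<epsilon>\<^sup>2" using dzw eps by (simp add: divide_right_mono norm_minus_commute)
              also have "r / \<epsilon>\<^sup>2 = \<delta> / 4" using eps by (simp add: r_def)
              finally show "cmod (m w - m z) \<le> \<delta> / 4" .
            qed simp
            finally show ?thesis .
          qed
          have "cmod (of_nat n * m z) \<le> cmod ((\<Sum>j\<in>{1..n}. f z (X j \<omega>)) - (\<Sum>j\<in>{1..n}. f w (X j \<omega>)))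
              + cmod ((\<Sum>j\<in>{1..n}. f w (X j \<omega>)) - of_nat n * m w) + cmod (of_nat n * m w - of_nat n * m z)"
            using A0 norm_triangle_ineq4 norm_triangle_ineq
            by (smt (verit, best) diff_add_cancel diff_zero norm_minus_commute)
          also have "\<dots> < real n * \<delta>"
          proof -
            have "real n * \<delta> > 0" using elim(2) \<delta> by simp
            then show ?thesis using e1 e2 e3 by linarith
          qed
          finally have "real n * cmod (m z) < real n * \<delta>" by (simp add: norm_mult)
          moreover have "\<delta> \<le> cmod (m z)" using z0(2)[OF zK] by (simp add: \<delta>_def)
          ultimately show False
            by (metis mult_left_mono not_le of_nat_0_le_iff)
        qed
      qed
    qed
  qed
  have "AE \<omega> in M. eventually (\<lambda>n. n \<ge> 1) sequentially" by (simp add: eventually_ge_at_top)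
  with AEX prob show ?thesis
  proof eventually_elim
    case (elim \<omega>)
    from elim(2,3) show ?case
    proof eventually_elim
      case (elim n)
      note Xs = \<open>\<forall>j. X j \<omega> \<in> S\<close>
      show ?case
      proof
        fix z assume zc: "z \<in> critical_points (emp_poly (\<lambda>j. X j \<omega>) n)"
        show "z \<in> nbhd_N \<mu> \<epsilon>"
        proof (rule ccontr)
          assume "z \<notin> nbhd_N \<mu> \<epsilon>"
          then have zT: "\<epsilon> \<le> infdist z T" unfolding nbhd_N_def T_def by auto
          have ne: "\<forall>j\<in>{1..n}. z \<noteq> X j \<omega>"
          proof
            fix j show "z \<noteq> X j \<omega>" using K1[OF zT, of "X j \<omega>"] Xs eps by auto
          qed
          from emp_poly_deriv[OF ne] zc
          have sum0: "(\<Sum>j\<in>{1..n}. f z (X j \<omega>)) = 0"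
            unfolding critical_points_def f_def by auto
          show False
          proof (cases "cmod z \<le> 2 * R")
            case True
            then have "z \<in> K" using zT by (auto simp: K_def)
            then show False using elim sum0 by blast
          next
            case False
            have "Re (z * (\<Sum>j\<in>{1..n}. f z (X j \<omega>))) = (\<Sum>j\<in>{1..n}. Re (z / (z - X j \<omega>)))"
              by (simp add: sum_distrib_left Re_sum f_def)
            also have "\<dots> > 0"
            proof (rule sum_pos)
              show "{1..n} \<noteq> {}" using \<open>n \<ge> 1\<close> by simp
              show "0 < Re (z / (z - X j \<omega>))" if "j \<in> {1..n}" for j
                using re_pos[OF R(2)[of "X j \<omega>"] _ R(1)] Xs False by auto
            qed simp
            finally have "0 < Re (z * (\<Sum>j\<in>{1..n}. f z (X j \<omega>)))" .
            then show False unfolding sum0 by simp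
          qed
        qed
      qed
    qed
  qed
qed
end
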